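(* Every discrete fibration $F:\mathcal C\to\mathcal D$ between indiscretely based categories is an almost discrete fibration.
   Context: A functor $F:\mathcal E\to\mathcal B$ is a discrete fibration if for each object $E$ of $\mathcal E$ and each morphism $f:B\to F(E)$ there is a unique morphism $g:E'\to E$ with $F(g)=f$. An $\mathbb N$-grading on a category is a functor to $\mathbb N$ (viewed as a one-object category); a category is indiscretely based if it is $\mathbb N$-graded and each connected component of its subcategory of length-zero morphisms is indiscrete. A factorization $q=g_0\circ\cdots\circ g_{n+1}$ ($n\ge0$) is nontrivial if no $g_i$ is an isomorphism. $F:\mathcal C\to\mathcal D$ is an almost discrete fibration if for every morphism $q$ of $\mathcal D$, every $p$ with $F(p)=q$ and every nontrivial factorization $q=g_0\circ\cdots\circ g_{n+1}$, there is a nontrivial factorization $p=f_0\circ\cdots\circ f_{n+1}$ with $F(f_i)=g_i$ for all $i$, unique up to the relation $(f_0,\dots,f_{n+1})\sim(f'_0,\dots,f'_{n+1})$ if there are isomorphisms $h_0,\dots,h_n$ with $f'_0=f_0\circ h_0$, $f'_i=h_{i-1}^{-1}\circ f_i\circ h_i$ ($1\le i\le n$), $f'_{n+1}=h_n^{-1}\circ f_{n+1}$. *)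

theory Defs
  imports Main
begin

record ('o, 'a) category_data =
  Obj  :: "'o set"
  Arr  :: "'a set"
  Dom  :: "'a \<Rightarrow> 'o"
  Cod  :: "'a \<Rightarrow> 'o"
  Ident :: "'o \<Rightarrow> 'a"
  Comp :: "'a \<Rightarrow> 'a \<Rightarrow> 'a"   (* Comp C g f = g \<circ> f, meaningful when Dom g = Cod f *)

definition composable :: "('o,'a) category_data \<Rightarrow> 'a \<Rightarrow> 'a \<Rightarrow> bool" where
  "composable C g f \<longleftrightarrow> g \<in> Arr C \<and> f \<in> Arr C \<and> Dom C g = Cod C f"

definition is_category :: "('o,'a) category_data \<Rightarrow> bool" where
  "is_category C \<longleftrightarrow>
     (\<forall>f\<in>Arr C. Dom C f \<in> Obj C \<and> Cod C f \<in> Obj C) \<and>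
     (\<forall>x\<in>Obj C. Ident C x \<in> Arr C \<and> Dom C (Ident C x) = x \<and> Cod C (Ident C x) = x) \<and>
     (\<forall>g f. composable C g f \<longrightarrow> Comp C g f \<in> Arr C \<and>
              Dom C (Comp C g f) = Dom C f \<and> Cod C (Comp C g f) = Cod C g) \<and>
     (\<forall>f\<in>Arr C. Comp C (Ident C (Cod C f)) f = f \<and> Comp C f (Ident C (Dom C f)) = f) \<and>
     (\<forall>h g f. composable C h g \<longrightarrow> composable C g f \<longrightarrow>
              Comp C h (Comp C g f) = Comp C (Comp C h g) f)"

definition is_functor ::
  "('o,'a) category_data \<Rightarrow> ('p,'b) category_data \<Rightarrow> ('o \<Rightarrow> 'p) \<Rightarrow> ('a \<Rightarrow> 'b) \<Rightarrow> bool" where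
  "is_functor C D Fo Fa \<longleftrightarrow> is_category C \<and> is_category D \<and>
     (\<forall>x\<in>Obj C. Fo x \<in> Obj D \<and> Fa (Ident C x) = Ident D (Fo x)) \<and>
     (\<forall>f\<in>Arr C. Fa f \<in> Arr D \<and> Dom D (Fa f) = Fo (Dom C f) \<and> Cod D (Fa f) = Fo (Cod C f)) \<and>
     (\<forall>g f. composable C g f \<longrightarrow> Fa (Comp C g f) = Comp D (Fa g) (Fa f))"

definition inverse_pair :: "('o,'a) category_data \<Rightarrow> 'a \<Rightarrow> 'a \<Rightarrow> bool" where
  "inverse_pair C h k \<longleftrightarrow> h \<in> Arr C \<and> k \<in> Arr C \<and> Dom C k = Cod C h \<and> Cod C k = Dom C h \<and>
     Comp C k h = Ident C (Dom C h) \<and> Comp C h k = Ident C (Cod C h)"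

definition is_iso :: "('o,'a) category_data \<Rightarrow> 'a \<Rightarrow> bool" where
  "is_iso C h \<longleftrightarrow> (\<exists>k. inverse_pair C h k)"

text \<open>An N-grading is a functor to N viewed as a one-object category (the monoid (N,+)).\<close>
definition is_grading :: "('o,'a) category_data \<Rightarrow> ('a \<Rightarrow> nat) \<Rightarrow> bool" where
  "is_grading C len \<longleftrightarrow>
     (\<forall>x\<in>Obj C. len (Ident C x) = 0) \<and>
     (\<forall>g f. composable C g f \<longrightarrow> len (Comp C g f) = len g + len f)"

definition zero_connected :: "('o,'a) category_data \<Rightarrow> ('a \<Rightarrow> nat) \<Rightarrow> 'o \<Rightarrow> 'o \<Rightarrow> bool" where
  "zero_connected C len x y \<longleftrightarrow>
     (\<lambda>u v. \<exists>f\<in>Arr C. len f = 0 \<and> ((Dom C f = u \<and> Cod C f = v) \<or> (Dom C f = v \<and> Cod C f = u)))\<^sup>*\<^sup>* x y"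

definition indiscretely_based :: "('o,'a) category_data \<Rightarrow> ('a \<Rightarrow> nat) \<Rightarrow> bool" where
  "indiscretely_based C len \<longleftrightarrow> is_category C \<and> is_grading C len \<and>
     (\<forall>x\<in>Obj C. \<forall>y\<in>Obj C. zero_connected C len x y \<longrightarrow>
        (\<exists>!f. f \<in> Arr C \<and> len f = 0 \<and> Dom C f = x \<and> Cod C f = y))"

definition discrete_fibration ::
  "('o,'a) category_data \<Rightarrow> ('p,'b) category_data \<Rightarrow> ('o \<Rightarrow> 'p) \<Rightarrow> ('a \<Rightarrow> 'b) \<Rightarrow> bool" where
  "discrete_fibration C D Fo Fa \<longleftrightarrow> is_functor C D Fo Fa \<and>
     (\<forall>E\<in>Obj C. \<forall>f\<in>Arr D. Cod D f = Fo E \<longrightarrow>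
        (\<exists>!g. g \<in> Arr C \<and> Cod C g = E \<and> Fa g = f))"

fun comp_list :: "('o,'a) category_data \<Rightarrow> 'a list \<Rightarrow> 'a" where
  "comp_list C [] = undefined"
| "comp_list C [g] = g"
| "comp_list C (g # gs) = Comp C g (comp_list C gs)"

definition factorization :: "('o,'a) category_data \<Rightarrow> 'a \<Rightarrow> 'a list \<Rightarrow> bool" where
  "factorization C q gs \<longleftrightarrow> length gs \<ge> 2 \<and> (\<forall>g\<in>set gs. g \<in> Arr C) \<and>
     (\<forall>i. Suc i < length gs \<longrightarrow> Dom C (gs ! i) = Cod C (gs ! Suc i)) \<and>
     comp_list C gs = q"

definition nontrivial_factorization :: "('o,'a) category_data \<Rightarrow> 'a \<Rightarrow> 'a list \<Rightarrow> bool" where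
  "nontrivial_factorization C q gs \<longleftrightarrow> factorization C q gs \<and> (\<forall>g\<in>set gs. \<not> is_iso C g)"

text \<open>The relation (f0,...,f(n+1)) ~ (f0',...,f(n+1)'): there are isomorphisms h0,...,hn
  (with inverses k0,...,kn) such that f0' = f0 \<circ> h0, fi' = h(i-1)^-1 \<circ> fi \<circ> hi (1 \<le> i \<le> n),
  f(n+1)' = hn^-1 \<circ> f(n+1).\<close>
definition fact_equiv :: "('o,'a) category_data \<Rightarrow> 'a list \<Rightarrow> 'a list \<Rightarrow> bool" where
  "fact_equiv C fs fs' \<longleftrightarrow> length fs' = length fs \<and> length fs \<ge> 2 \<and>
     (\<exists>hs ks. length hs = length fs - 1 \<and> length ks = length fs - 1 \<and>
        (\<forall>i < length hs. inverse_pair C (hs ! i) (ks ! i) \<and> Cod C (hs ! i) = Dom C (fs ! i)) \<and>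
        fs' ! 0 = Comp C (fs ! 0) (hs ! 0) \<and>
        (\<forall>i. 1 \<le> i \<and> i < length hs \<longrightarrow>
             fs' ! i = Comp C (ks ! (i - 1)) (Comp C (fs ! i) (hs ! i))) \<and>
        fs' ! (length fs - 1) = Comp C (ks ! (length fs - 2)) (fs ! (length fs - 1)))"

definition almost_discrete_fibration ::
  "('o,'a) category_data \<Rightarrow> ('p,'b) category_data \<Rightarrow> ('o \<Rightarrow> 'p) \<Rightarrow> ('a \<Rightarrow> 'b) \<Rightarrow> bool" where
  "almost_discrete_fibration C D Fo Fa \<longleftrightarrow> is_functor C D Fo Fa \<and>
     (\<forall>q\<in>Arr D. \<forall>p\<in>Arr C. \<forall>gs. Fa p = q \<longrightarrow> nontrivial_factorization D q gs \<longrightarrow>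
        (\<exists>fs. nontrivial_factorization C p fs \<and> map Fa fs = gs) \<and>
        (\<forall>fs fs'. nontrivial_factorization C p fs \<and> map Fa fs = gs \<and>
                  nontrivial_factorization C p fs' \<and> map Fa fs' = gs \<longrightarrow> fact_equiv C fs fs'))"

end

theory Submission
  imports Defs
begin

fun chain :: "('o,'a) category_data \<Rightarrow> 'a list \<Rightarrow> bool" where
  "chain C [] = True"
| "chain C [g] = (g \<in> Arr C)"
| "chain C (g # h # gs) = (g \<in> Arr C \<and> Dom C g = Cod C h \<and> chain C (h # gs))"

lemma chain_iff:
  "chain C gs \<longleftrightarrow> (\<forall>g\<in>set gs. g \<in> Arr C) \<and>
     (\<forall>i. Suc i < length gs \<longrightarrow> Dom C (gs ! i) = Cod C (gs ! Suc i))"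
proof (induction C gs rule: chain.induct)
  case (3 C g h gs)
  have e: "(\<forall>i. Suc i < length (g#h#gs) \<longrightarrow> Dom C ((g#h#gs) ! i) = Cod C ((g#h#gs) ! Suc i))
    \<longleftrightarrow> Dom C g = Cod C h \<and> (\<forall>i. Suc i < length (h#gs) \<longrightarrow> Dom C ((h#gs) ! i) = Cod C ((h#gs) ! Suc i))"
    (is "?A \<longleftrightarrow> ?B")
  proof
    assume ?A
    then show ?B by (metis Suc_less_eq length_Cons nth_Cons_0 nth_Cons_Suc zero_less_Suc)
  next
    assume b: ?B
    show ?A
    proof (intro allI impI)
      fix i assume "Suc i < length (g#h#gs)"
      then show "Dom C ((g#h#gs) ! i) = Cod C ((g#h#gs) ! Suc i)"
        using b by (cases i) auto
    qed
  qed
  show ?case unfolding e using 3 by auto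
qed auto

lemma comp_list_props:
  assumes "is_category C" "chain C fs" "fs \<noteq> []"
  shows "comp_list C fs \<in> Arr C \<and> Cod C (comp_list C fs) = Cod C (hd fs) \<and> Dom C (comp_list C fs) = Dom C (last fs)"
  using assms(2,3)
proof (induction fs rule: induct_list012)
  case (3 g v vs)
  have ch: "g \<in> Arr C" "Dom C g = Cod C v" "chain C (v # vs)" using 3(3) by auto
  have IH: "comp_list C (v#vs) \<in> Arr C \<and> Cod C (comp_list C (v#vs)) = Cod C v \<and> Dom C (comp_list C (v#vs)) = Dom C (last (v#vs))"
    using 3(2) ch(3) by simp
  have cm: "composable C g (comp_list C (v#vs))" using ch IH unfolding composable_def by simp
  have "Comp C g (comp_list C (v#vs)) \<in> Arr C \<and> Dom C (Comp C g (comp_list C (v#vs))) = Dom C (comp_list C (v#vs))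
     \<and> Cod C (Comp C g (comp_list C (v#vs))) = Cod C g"
    using assms(1) cm unfolding is_category_def by blast
  then show ?case using IH by simp
qed auto

lemma comp_list_functor:
  assumes "is_functor C D Fo Fa" "chain C fs" "fs \<noteq> []"
  shows "Fa (comp_list C fs) = comp_list D (map Fa fs)"
  using assms(2,3)
proof (induction fs rule: induct_list012)
  case (3 g v vs)
  have c: "is_category C" using assms(1) unfolding is_functor_def by simp
  have "composable C g (comp_list C (v#vs))"
    using comp_list_props[OF c, of "v#vs"] 3(3) unfolding composable_def by auto
  moreover have "Fa (comp_list C (v#vs)) = comp_list D (map Fa (v#vs))" using 3(2,3) by simp
  ultimately show ?case using assms(1) unfolding is_functor_def by auto
qed auto

lemma lift_exists:
  assumes df: "discrete_fibration C D Fo Fa"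
  shows "chain D gs \<Longrightarrow> gs \<noteq> [] \<Longrightarrow> E \<in> Obj C \<Longrightarrow> Cod D (hd gs) = Fo E \<Longrightarrow>
     \<exists>fs. chain C fs \<and> map Fa fs = gs \<and> Cod C (hd fs) = E"
proof (induction gs arbitrary: E)
  case Nil then show ?case by simp
next
  case (Cons g gs)
  have fF: "is_functor C D Fo Fa" using df unfolding discrete_fibration_def by simp
  have cC: "is_category C" using fF unfolding is_functor_def by simp
  have gA: "g \<in> Arr D" using Cons(2) by (cases gs) auto
  obtain f where f: "f \<in> Arr C" "Cod C f = E" "Fa f = g"
    using df Cons(4,5) gA unfolding discrete_fibration_def by force
  show ?case
  proof (cases gs)
    case Nil then show ?thesis using f by (intro exI[of _ "[f]"]) auto
  next
    case (Cons h hs)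
    have dO: "Dom C f \<in> Obj C" using cC f unfolding is_category_def by auto
    have "Fo (Dom C f) = Dom D g" using fF f unfolding is_functor_def by auto
    also have "\<dots> = Cod D (hd gs)" using Cons \<open>chain D (g # gs)\<close> by simp
    finally obtain fs where fs: "chain C fs" "map Fa fs = gs" "Cod C (hd fs) = Dom C f"
      using Cons.IH[of "Dom C f"] \<open>chain D (g # gs)\<close> dO Cons by (auto)
    then show ?thesis using f Cons
      by (intro exI[of _ "f # fs"]) (cases fs; auto)
  qed
qed

lemma lift_unique:
  assumes df: "discrete_fibration C D Fo Fa"
  shows "chain C fs \<Longrightarrow> chain C fs' \<Longrightarrow> map Fa fs = map Fa fs' \<Longrightarrow> fs \<noteq> [] \<Longrightarrow>
     Cod C (hd fs) = Cod C (hd fs') \<Longrightarrow> fs = fs'"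
proof (induction fs arbitrary: fs')
  case Nil then show ?case by simp
next
  case (Cons f fs)
  obtain f' fs2 where fs': "fs' = f' # fs2" using Cons(4) by (cases fs') auto
  have fF: "is_functor C D Fo Fa" using df unfolding discrete_fibration_def by simp
  have cC: "is_category C" using fF unfolding is_functor_def by simp
  have fA: "f \<in> Arr C" using Cons(2) by (cases fs) auto
  have fA': "f' \<in> Arr C" using Cons(3) fs' by (cases fs2) auto
  have E: "Cod C f \<in> Obj C" using cC fA unfolding is_category_def by auto
  have "Fa f \<in> Arr D" "Cod D (Fa f) = Fo (Cod C f)" using fF fA unfolding is_functor_def by auto
  then have "\<exists>!g. g \<in> Arr C \<and> Cod C g = Cod C f \<and> Fa g = Fa f"
    using df E unfolding discrete_fibration_def by blast
  moreover have "Fa f' = Fa f" "Cod C f' = Cod C f" using Cons(4,6) fs' by auto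
  ultimately have ff: "f' = f" using fA fA' by blast
  show ?case
  proof (cases fs)
    case Nil then show ?thesis using Cons(4) fs' ff by auto
  next
    case (Cons h hs)
    then obtain h' hs' where fs2: "fs2 = h' # hs'" using \<open>map Fa (f # fs) = map Fa fs'\<close> fs' by (cases fs2) auto
    have "fs = fs2"
      apply (rule Cons.IH)
      using Cons.prems fs' fs2 \<open>fs = h # hs\<close> ff by auto
    then show ?thesis using fs' ff by simp
  qed
qed

lemma functor_iso:
  assumes "is_functor C D Fo Fa" "is_iso C f"
  shows "is_iso D (Fa f)"
proof -
  obtain k where k: "inverse_pair C f k" using assms(2) unfolding is_iso_def by auto
  have cC: "is_category C" using assms(1) unfolding is_functor_def by simp
  have c1: "composable C k f" "composable C f k" using k unfolding inverse_pair_def composable_def by auto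
  have o: "Dom C f \<in> Obj C" "Cod C f \<in> Obj C" using cC k unfolding is_category_def inverse_pair_def by auto
  have "inverse_pair D (Fa f) (Fa k)"
    using assms(1) k c1 o unfolding is_functor_def inverse_pair_def by metis
  then show ?thesis unfolding is_iso_def by auto
qed

lemma cat_dom_cod: "is_category C \<Longrightarrow> f \<in> Arr C \<Longrightarrow> Dom C f \<in> Obj C \<and> Cod C f \<in> Obj C"
  unfolding is_category_def by simp
lemma cat_ident: "is_category C \<Longrightarrow> x \<in> Obj C \<Longrightarrow> Ident C x \<in> Arr C \<and> Dom C (Ident C x) = x \<and> Cod C (Ident C x) = x"
  unfolding is_category_def by simp
lemma cat_unit: "is_category C \<Longrightarrow> f \<in> Arr C \<Longrightarrow> Comp C (Ident C (Cod C f)) f = f \<and> Comp C f (Ident C (Dom C f)) = f"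
  unfolding is_category_def by simp

lemma fact_equiv_refl:
  assumes cC: "is_category C" and ch: "chain C fs" and l: "length fs \<ge> 2"
  shows "fact_equiv C fs fs"
proof -
  define hs where "hs = map (\<lambda>i. Ident C (Dom C (fs ! i))) [0..<length fs - 1]"
  have lh: "length hs = length fs - 1" unfolding hs_def by simp
  have hsi: "\<And>i. i < length hs \<Longrightarrow> hs ! i = Ident C (Dom C (fs ! i))" unfolding hs_def by simp
  have arr: "\<forall>g\<in>set fs. g \<in> Arr C" and con: "\<forall>i. Suc i < length fs \<longrightarrow> Dom C (fs ! i) = Cod C (fs ! Suc i)"
    using ch unfolding chain_iff[of C fs] by auto
  have ar: "\<And>i. i < length fs \<Longrightarrow> fs ! i \<in> Arr C" using arr by auto
  have ob: "\<And>i. i < length fs \<Longrightarrow> Dom C (fs ! i) \<in> Obj C"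
    using ar cat_dom_cod[OF cC] by blast
  have idc: "\<And>x. x \<in> Obj C \<Longrightarrow> Ident C x \<in> Arr C \<and> Dom C (Ident C x) = x \<and> Cod C (Ident C x) = x"
    using cat_ident[OF cC] by blast
  have idp: "\<And>x. x \<in> Obj C \<Longrightarrow> inverse_pair C (Ident C x) (Ident C x)"
  proof -
    fix x assume x: "x \<in> Obj C"
    have i: "Ident C x \<in> Arr C" "Dom C (Ident C x) = x" "Cod C (Ident C x) = x"
      using idc[OF x] by auto
    have "Comp C (Ident C (Cod C (Ident C x))) (Ident C x) = Ident C x" using cat_unit[OF cC i(1)] by blast
    then have "Comp C (Ident C x) (Ident C x) = Ident C x" using i by simp
    then show "inverse_pair C (Ident C x) (Ident C x)" using i unfolding inverse_pair_def by simp
  qed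
  have rid: "\<And>i. i < length fs \<Longrightarrow> Comp C (fs ! i) (Ident C (Dom C (fs ! i))) = fs ! i"
    using ar cat_unit[OF cC] by blast
  have lid: "\<And>i. i < length fs \<Longrightarrow> Comp C (Ident C (Cod C (fs ! i))) (fs ! i) = fs ! i"
    using ar cat_unit[OF cC] by blast
  have A: "\<forall>i<length hs. inverse_pair C (hs ! i) (hs ! i) \<and> Cod C (hs ! i) = Dom C (fs ! i)"
  proof (intro allI impI)
    fix i assume i: "i < length hs"
    then have i': "i < length fs" using lh by simp
    show "inverse_pair C (hs ! i) (hs ! i) \<and> Cod C (hs ! i) = Dom C (fs ! i)"
      using hsi[OF i] idp[OF ob[OF i']] idc[OF ob[OF i']] by simp
  qed
  have z: "0 < length fs" "0 < length hs" using l lh by auto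
  have B: "fs ! 0 = Comp C (fs ! 0) (hs ! 0)" using hsi[OF z(2)] rid[OF z(1)] by simp
  have Cc: "\<forall>i. 1 \<le> i \<and> i < length hs \<longrightarrow> fs ! i = Comp C (hs ! (i - 1)) (Comp C (fs ! i) (hs ! i))"
  proof (intro allI impI)
    fix i assume i: "1 \<le> i \<and> i < length hs"
    have si: "Suc (i-1) = i" using i by simp
    have il: "i < length fs" using i lh by linarith
    have "Suc (i-1) < length fs" using i lh by linarith
    then have "Dom C (fs ! (i-1)) = Cod C (fs ! Suc (i-1))" using con by blast
    then have e: "Dom C (fs ! (i-1)) = Cod C (fs ! i)" using si by simp
    have "i - 1 < length hs" using i by linarith
    then have "hs ! (i-1) = Ident C (Dom C (fs ! (i-1)))" using hsi by blast
    moreover have "hs ! i = Ident C (Dom C (fs ! i))" using hsi i by simp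
    ultimately show "fs ! i = Comp C (hs ! (i - 1)) (Comp C (fs ! i) (hs ! i))"
      using rid[OF il] lid[OF il] e by simp
  qed
  have e2: "Dom C (fs ! (length fs - 2)) = Cod C (fs ! (length fs - 1))"
    using con[rule_format, of "length fs - 2"] l by (simp add: Suc_diff_Suc numeral_2_eq_2)
  have "hs ! (length fs - 2) = Ident C (Dom C (fs ! (length fs - 2)))" using hsi[of "length fs - 2"] lh l by simp
  then have D: "fs ! (length fs - 1) = Comp C (hs ! (length fs - 2)) (fs ! (length fs - 1))"
    using lid[of "length fs - 1"] l e2 by simp
  show ?thesis unfolding fact_equiv_def
    using A B Cc D lh l by blast
qed

lemma nf_iff:
  "nontrivial_factorization C q gs \<longleftrightarrow> chain C gs \<and> length gs \<ge> 2 \<and> comp_list C gs = q \<and> (\<forall>g\<in>set gs. \<not> is_iso C g)"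
  unfolding nontrivial_factorization_def factorization_def chain_iff[of C gs] by blast

lemma df_unique:
  assumes "discrete_fibration C D Fo Fa" "E \<in> Obj C" "f \<in> Arr D" "Cod D f = Fo E"
    "g \<in> Arr C" "Cod C g = E" "Fa g = f" "g' \<in> Arr C" "Cod C g' = E" "Fa g' = f"
  shows "g = g'"
proof -
  have "\<exists>!g. g \<in> Arr C \<and> Cod C g = E \<and> Fa g = f"
    using assms(1) unfolding discrete_fibration_def using assms(2,3,4) by blast
  then show ?thesis using assms(5-10) by blast
qed

lemma functor_arr:
  "is_functor C D Fo Fa \<Longrightarrow> f \<in> Arr C \<Longrightarrow> Fa f \<in> Arr D \<and> Dom D (Fa f) = Fo (Dom C f) \<and> Cod D (Fa f) = Fo (Cod C f)"
  unfolding is_functor_def by blast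

theorem proposition2p76:
  fixes C :: "('o, 'a) category_data" and D :: "('p, 'b) category_data"
    and Fo :: "'o \<Rightarrow> 'p" and Fa :: "'a \<Rightarrow> 'b"
    and lenC :: "'a \<Rightarrow> nat" and lenD :: "'b \<Rightarrow> nat"
  assumes "indiscretely_based C lenC"
    and "indiscretely_based D lenD"
    and "discrete_fibration C D Fo Fa"
  shows "almost_discrete_fibration C D Fo Fa"
proof -
  have df: "discrete_fibration C D Fo Fa" by fact
  have fF: "is_functor C D Fo Fa" using df unfolding discrete_fibration_def by simp
  have cC: "is_category C" and cD: "is_category D" using fF unfolding is_functor_def by auto
  have key: "Cod C (hd fs) = Cod C p" if "chain C fs" "fs \<noteq> []" "comp_list C fs = p" for p fs
    using comp_list_props[OF cC that(1,2)] that(3) by simp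
  show ?thesis unfolding almost_discrete_fibration_def
  proof (intro conjI fF ballI allI impI)
    fix q p gs
    assume q: "q \<in> Arr D" and p: "p \<in> Arr C" and fp: "Fa p = q" and nt: "nontrivial_factorization D q gs"
    have chg: "chain D gs" and lg: "length gs \<ge> 2" and cg: "comp_list D gs = q"
      and ni: "\<forall>g\<in>set gs. \<not> is_iso D g"
      using nt unfolding nf_iff by auto
    have gne: "gs \<noteq> []" using lg by auto
    have pO: "Cod C p \<in> Obj C" using cat_dom_cod[OF cC p] by simp
    have "Cod D (hd gs) = Cod D q" using comp_list_props[OF cD chg gne] cg by simp
    also have "\<dots> = Fo (Cod C p)" using functor_arr[OF fF p] fp by simp
    finally obtain fs where fs: "chain C fs" "map Fa fs = gs" "Cod C (hd fs) = Cod C p"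
      using lift_exists[OF df chg gne pO] by blast
    have fne: "fs \<noteq> []" using fs gne by auto
    have cp: "comp_list C fs \<in> Arr C" "Cod C (comp_list C fs) = Cod C p"
      using comp_list_props[OF cC fs(1) fne] fs(3) by auto
    have fc: "Fa (comp_list C fs) = q" using comp_list_functor[OF fF fs(1) fne] fs(2) cg by simp
    have eq: "comp_list C fs = p"
      using df_unique[OF df pO q _ cp(1) cp(2) fc p refl fp] functor_arr[OF fF p] fp by simp
    have "\<forall>f\<in>set fs. \<not> is_iso C f"
    proof
      fix f assume "f \<in> set fs"
      then have "Fa f \<in> set gs" using fs(2) by auto
      then show "\<not> is_iso C f" using ni functor_iso[OF fF] by blast
    qed
    moreover have "length fs \<ge> 2" using fs(2) lg by auto
    ultimately have "nontrivial_factorization C p fs" using fs(1) eq unfolding nf_iff by simp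
    then show "\<exists>fs. nontrivial_factorization C p fs \<and> map Fa fs = gs"
      using fs(2) by blast
  next
    fix q p gs fs fs'
    assume p: "p \<in> Arr C" and nt: "nontrivial_factorization D q gs"
      and h: "nontrivial_factorization C p fs \<and> map Fa fs = gs \<and> nontrivial_factorization C p fs' \<and> map Fa fs' = gs"
    have c1: "chain C fs" "chain C fs'" and l: "length fs \<ge> 2" "length fs' \<ge> 2"
      and e: "comp_list C fs = p" "comp_list C fs' = p"
      using h unfolding nf_iff by auto
    have ne: "fs \<noteq> []" "fs' \<noteq> []" using l by auto
    have m: "map Fa fs = map Fa fs'" using h by simp
    have "fs = fs'"
      using lift_unique[OF df c1 m ne(1)] key[OF c1(1) ne(1) e(1)] key[OF c1(2) ne(2) e(2)] by simp
    then show "fact_equiv C fs fs'" using fact_equiv_refl[OF cC c1(1) l(1)] by simp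
  qed
qed

end
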